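(* Let $G$ be a connected bipartite graph with color classes $E$ and $V$, let $d=|E|+|V|-2$, and let $\varepsilon_G(s)=|(s\cdot Q_G)\cap(\mathbf Z^E\oplus\mathbf Z^V)|$ be the Ehrhart polynomial of its root polytope, written (uniquely) as $\varepsilon_G(s)=\sum_{k=0}^{d}a_k\binom{s+d-k}{d}$ with rational $a_k$. Then the $h$-vector $h$ of any triangulation of $Q_G$ satisfies \[x^{|E|+|V|-1}h(x^{-1})=a_0+a_1x+\cdots+a_dx^d.\] In particular, all triangulations of $Q_G$ have the same $h$-vector.
   Context: Bipartite graphs have no multiple edges; every edge joins $E$ to $V$. The root polytope $Q_G\subset\mathbf R^E\oplus\mathbf R^V$ is the convex hull of $\mathbf i_{\{e\}}+\mathbf i_{\{v\}}$ over edges $ev$ of $G$ ($\mathbf i$ = indicator vector); it has dimension $d=|E|+|V|-2$ when $G$ is connected. $\binom{s+d-k}{d}$ is regarded as a polynomial in $s$. A triangulation of $Q_G$ is a collection of $d$-dimensional simplices spanned by vertices of $Q_G$, pairwise intersecting in common faces, with union $Q_G$, viewed as the simplicial complex of all their faces. Its $f$-vector is $f(y)=y^{d+1}+f_0y^d+\cdots+f_{d-1}y+f_d$ with $f_k$ the number of $k$-dimensional simplices, and its $h$-vector is $h(x)=f(x-1)$. *)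

theory Defs
  imports "HOL-Analysis.Analysis"
begin

text \<open>A bipartite graph with colour classes the (finite) types 'e and 'v is given by
  its edge relation G :: 'e => 'v => bool. Vertices of the graph are elements of 'e + 'v.\<close>

definition bip_adj :: "('e \<Rightarrow> 'v \<Rightarrow> bool) \<Rightarrow> (('e + 'v) \<times> ('e + 'v)) set" where
  "bip_adj G = {(Inl e, Inr v) | e v. G e v} \<union> {(Inr v, Inl e) | e v. G e v}"

definition bip_connected :: "('e \<Rightarrow> 'v \<Rightarrow> bool) \<Rightarrow> bool" where
  "bip_connected G \<longleftrightarrow> (\<forall>x y. (x, y) \<in> (bip_adj G)\<^sup>*)"

definition root_polytope :: "('e::finite \<Rightarrow> 'v::finite \<Rightarrow> bool) \<Rightarrow> (real ^ ('e + 'v)) set" where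
  "root_polytope G = convex hull {axis (Inl e) 1 + axis (Inr v) 1 | e v. G e v}"

definition ehrhart :: "('e::finite \<Rightarrow> 'v::finite \<Rightarrow> bool) \<Rightarrow> nat \<Rightarrow> nat" where
  "ehrhart G s = card {x \<in> (\<lambda>p. real s *\<^sub>R p) ` root_polytope G. \<forall>i. x $ i \<in> \<int>}"

definition is_triangulation :: "nat \<Rightarrow> ('a::euclidean_space) set \<Rightarrow> 'a set set \<Rightarrow> bool" where
  "is_triangulation d P T \<longleftrightarrow>
     (\<forall>S\<in>T. S \<subseteq> {x. x extreme_point_of P} \<and> \<not> affine_dependent S \<and> card S = d + 1) \<and>
     (\<forall>S\<in>T. \<forall>S'\<in>T. (convex hull S \<inter> convex hull S') face_of (convex hull S) \<and>
                     (convex hull S \<inter> convex hull S') face_of (convex hull S')) \<and>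
     \<Union> ((\<lambda>S. convex hull S) ` T) = P"

text \<open>Number of faces of the simplicial complex with j vertices (i.e. of dimension j-1);
  j = 0 gives the empty face.\<close>

definition face_count :: "'a set set \<Rightarrow> nat \<Rightarrow> nat" where
  "face_count T j = card {F. \<exists>S\<in>T. F \<subseteq> S \<and> card F = j}"

definition f_poly :: "nat \<Rightarrow> 'a set set \<Rightarrow> real \<Rightarrow> real" where
  "f_poly d T y = (\<Sum>j\<le>d+1. real (face_count T j) * y ^ (d + 1 - j))"

definition h_poly :: "nat \<Rightarrow> 'a set set \<Rightarrow> real \<Rightarrow> real" where
  "h_poly d T x = f_poly d T (x - 1)"

end

theory Submission
  imports Defs "HOL-Computational_Algebra.Polynomial_FPS" begin

definition edgevecs :: "('e::finite \<Rightarrow> 'v::finite \<Rightarrow> bool) \<Rightarrow> (real ^ ('e + 'v)) set" where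
  "edgevecs G = {axis (Inl e) 1 + axis (Inr v) 1 | e v. G e v}"

lemma axis_nth': "(axis i (1::real)) $ u = (if u = i then 1 else 0)"
  by (simp add: axis_def)
lemma axis_sum: "(\<Sum>u\<in>UNIV. (axis i (1::real)) $ u) = 1"
  by (simp add: axis_nth')
lemma axis_sumL: "(\<Sum>e\<in>UNIV. (axis i (1::real)) $ Inl e) = (if \<exists>e. i = Inl e then 1 else 0)"
  by (cases i) (simp_all add: axis_nth')
lemma axis_sumR: "(\<Sum>e\<in>UNIV. (axis i (1::real)) $ Inr e) = (if \<exists>e. i = Inr e then 1 else 0)"
  by (cases i) (simp_all add: axis_nth')

lemma edge_nth: "(axis (Inl e) 1 + axis (Inr v) 1 :: real ^ ('e::finite + 'v::finite)) $ u =
   (if u = Inl e then 1 else 0) + (if u = Inr v then 1 else 0)"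
  by (simp add: axis_nth')

lemma edgevecs_finite: "finite (edgevecs G)"
proof -
  have "edgevecs G = (\<lambda>(e,v). axis (Inl e) 1 + axis (Inr v) 1) ` {(e,v). G e v}"
    by (auto simp: edgevecs_def)
  then show ?thesis by simp
qed

definition Lf :: "real ^ ('e::finite + 'v::finite) \<Rightarrow> real" where
  "Lf x = (\<Sum>e\<in>UNIV. x $ Inl e)"

lemma Lf_edge: "w \<in> edgevecs G \<Longrightarrow> Lf w = 1"
  by (auto simp: edgevecs_def Lf_def sum.distrib axis_sumL)

lemma Lf_sum: "Lf (\<Sum>f\<in>F. c f *\<^sub>R f) = (\<Sum>f\<in>F. c f * Lf f)"
  unfolding Lf_def sum_component vector_scaleR_component sum_distrib_left
  by (simp only: scaleR_conv_of_real of_real_def[symmetric] of_real_eq_id id_def) (rule sum.swap)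

lemma edge_indep:
  assumes FW: "F \<subseteq> edgevecs G" and ai: "\<not> affine_dependent F"
  shows "independent F"
proof
  assume dep: "dependent F"
  have fin: "finite F" using FW edgevecs_finite finite_subset by blast
  obtain u where u1: "\<exists>v\<in>F. u v \<noteq> 0" and u2: "(\<Sum>v\<in>F. u v *\<^sub>R v) = 0"
    using dep unfolding dependent_finite[OF fin] by blast
  have "Lf (\<Sum>v\<in>F. u v *\<^sub>R v) = (\<Sum>v\<in>F. u v * Lf v)" by (rule Lf_sum)
  also have "\<dots> = sum u F"
  proof (rule sum.cong[OF refl])
    fix v assume "v \<in> F"
    then have "Lf v = 1" using FW Lf_edge[of v G] by blast
    then show "u v * Lf v = u v" by simp
  qed
  finally have "sum u F = 0" using u2 by (simp add: Lf_def)
  then have "affine_dependent F" unfolding affine_dependent_explicit_finite[OF fin] using u1 u2 by blast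
  then show False using ai by simp
qed

lemma edge_val: "w \<in> edgevecs G \<Longrightarrow> w $ u = 0 \<or> w $ u = 1"
  by (auto simp: edgevecs_def axis_nth')

lemma edge_sum2: "w \<in> edgevecs G \<Longrightarrow> (\<Sum>u\<in>UNIV. w $ u) = 2"
  by (auto simp: edgevecs_def sum.distrib axis_sum)

definition hf :: "real ^ ('e::finite + 'v::finite) \<Rightarrow> real" where
  "hf x = (\<Sum>e\<in>UNIV. x $ Inl e) - (\<Sum>v\<in>UNIV. x $ Inr v)"

lemma hf_subspace: "subspace {x. hf x = 0}"
  by (rule subspaceI) (auto simp: hf_def sum.distrib sum_distrib_left[symmetric] algebra_simps)

lemma hf_edge: "w \<in> edgevecs G \<Longrightarrow> hf w = 0"
  by (auto simp: edgevecs_def hf_def sum.distrib axis_sumL axis_sumR)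

lemma edge_leaf:
  assumes FW: "F \<subseteq> edgevecs G" and Fne: "F \<noteq> {}" and ind: "independent F"
  shows "\<exists>f0\<in>F. \<exists>u. f0 $ u = 1 \<and> (\<forall>f\<in>F. f \<noteq> f0 \<longrightarrow> f $ u = 0)"
proof (rule ccontr)
  assume nl: "\<not> ?thesis"
  have fin: "finite F" using FW edgevecs_finite finite_subset by blast
  define U where "U = {u. \<exists>f\<in>F. f $ u \<noteq> 0}"
  have nonneg: "0 \<le> f $ u" if "f \<in> F" for f u
  proof -
    have "f \<in> edgevecs G" using that FW by auto
    then have "f $ u = 0 \<or> f $ u = 1" by (rule edge_val)
    then show ?thesis by auto
  qed
  have ge2: "2 \<le> (\<Sum>f\<in>F. f $ u)" if uU: "u \<in> U" for u
  proof -
    obtain f where f: "f \<in> F" "f $ u \<noteq> 0" using uU U_def by auto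
    then have f1: "f $ u = 1" using FW edge_val by blast
    then obtain f' where f': "f' \<in> F" "f' \<noteq> f" "f' $ u \<noteq> 0" using nl f by blast
    then have f1': "f' $ u = 1" using FW edge_val by blast
    have "(\<Sum>f\<in>{f, f'}. f $ u) \<le> (\<Sum>f\<in>F. f $ u)"
      using f f' fin nonneg by (intro sum_mono2) auto
    then show ?thesis using f1 f1' f'(2) by simp
  qed
  have "2 * real (card U) = (\<Sum>u\<in>U. 2)" by simp
  also have "\<dots> \<le> (\<Sum>u\<in>U. \<Sum>f\<in>F. f $ u)" using ge2 by (intro sum_mono) auto
  also have "\<dots> \<le> (\<Sum>u\<in>UNIV. \<Sum>f\<in>F. f $ u)"
    using nonneg by (intro sum_mono2) (auto intro: sum_nonneg)
  also have "\<dots> = (\<Sum>f\<in>F. \<Sum>u\<in>UNIV. f $ u)" by (rule sum.swap)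
  also have "\<dots> = (\<Sum>f\<in>F. 2)" using FW edge_sum2 by (intro sum.cong) auto
  also have "\<dots> = 2 * real (card F)" by simp
  finally have cUF: "card U \<le> card F" by simp
  obtain f0 where f0: "f0 \<in> F" using Fne by auto
  then obtain e v where f0e: "f0 = axis (Inl e) 1 + axis (Inr v) 1" using FW by (auto simp: edgevecs_def)
  define u0 where "u0 = (Inl e :: 'a + 'b)"
  have u0U: "u0 \<in> U" unfolding U_def u0_def using f0 f0e by (intro CollectI bexI[of _ f0]) (auto simp: axis_nth')
  have notspan: "axis u0 1 \<notin> span F"
  proof
    assume "axis u0 1 \<in> span F"
    moreover have "span F \<subseteq> {x. hf x = 0}"
      using FW hf_edge hf_subspace by (intro span_minimal) auto
    ultimately have "hf (axis u0 1) = 0" by auto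
    then show False by (simp add: hf_def u0_def axis_sumL axis_sumR)
  qed
  have ind2: "independent (insert (axis u0 1) F)"
    using ind notspan by (simp add: independent_insert)
  have sp: "insert (axis u0 1) F \<subseteq> span ((\<lambda>u. axis u 1) ` U)"
  proof (intro insert_subsetI subsetI)
    show "axis u0 1 \<in> span ((\<lambda>u. axis u (1::real)) ` U)" using u0U by (intro span_base) auto
  next
    fix f assume f: "f \<in> F"
    then obtain e v where fe: "f = axis (Inl e) 1 + axis (Inr v) 1" using FW by (auto simp: edgevecs_def)
    have "Inl e \<in> U" "Inr v \<in> U" unfolding U_def using f fe by (auto simp: axis_nth' intro!: bexI[of _ f])
    then show "f \<in> span ((\<lambda>u. axis u 1) ` U)" unfolding fe by (intro span_add span_base) auto
  qed
  have "card (insert (axis u0 1) F) \<le> card ((\<lambda>u. axis u (1::real)) ` U)"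
    using independent_span_bound[OF _ ind2 sp] by simp
  also have "\<dots> \<le> card U" by (rule card_image_le) simp
  finally have cc: "card (insert (axis u0 1) F) \<le> card U" .
  moreover have "axis u0 1 \<notin> F" using notspan span_base[of "axis u0 1" F] by auto
  ultimately have "card F + 1 \<le> card U" using fin by simp
  then show False using cUF by simp
qed

lemma edge_int: "w \<in> edgevecs G \<Longrightarrow> w $ u \<in> \<int>"
  using edge_val[of w G u] by auto

lemma unimod_aux:
  "card F = n \<Longrightarrow> F \<subseteq> edgevecs G \<Longrightarrow> independent F \<Longrightarrow> \<forall>i. (\<Sum>f\<in>F. c f *\<^sub>R f) $ i \<in> \<int>
   \<Longrightarrow> \<forall>f\<in>F. c f \<in> \<int>"
proof (induction n arbitrary: F)
  case 0
  have fin: "finite F" using "0.prems"(2) edgevecs_finite finite_subset by blast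
  then have "F = {}" using "0.prems"(1) by simp
  then show ?case by simp
next
  case (Suc n)
  have FW: "F \<subseteq> edgevecs G" and indF: "independent F" and intF: "\<forall>i. (\<Sum>f\<in>F. c f *\<^sub>R f) $ i \<in> \<int>"
    using Suc.prems by auto
  have fin: "finite F" using FW edgevecs_finite finite_subset by blast
  have Fne: "F \<noteq> {}" using Suc.prems(1) by auto
  obtain f0 u where f0: "f0 \<in> F" "f0 $ u = 1" and oth: "\<forall>f\<in>F. f \<noteq> f0 \<longrightarrow> f $ u = 0"
    using edge_leaf[OF FW Fne indF] by blast
  have "(\<Sum>f\<in>F. c f *\<^sub>R f) $ u = (\<Sum>f\<in>F. c f * f $ u)" by simp
  also have "\<dots> = c f0 * f0 $ u + (\<Sum>f\<in>F - {f0}. c f * f $ u)"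
    using fin f0(1) by (simp add: sum.remove)
  also have "(\<Sum>f\<in>F - {f0}. c f * f $ u) = 0" using oth by (intro sum.neutral) auto
  finally have e0: "(\<Sum>f\<in>F. c f *\<^sub>R f) $ u = c f0" using f0(2) by simp
  have "(\<Sum>f\<in>F. c f *\<^sub>R f) $ u \<in> \<int>" using intF by (rule spec)
  then have c0: "c f0 \<in> \<int>" unfolding e0 .
  define F' where "F' = F - {f0}"
  have F'W: "F' \<subseteq> edgevecs G" using FW F'_def by auto
  have indF': "independent F'" using independent_mono[OF indF, of F'] F'_def by blast
  have sumF: "(\<Sum>f\<in>F. c f *\<^sub>R f) = c f0 *\<^sub>R f0 + (\<Sum>f\<in>F'. c f *\<^sub>R f)"
    using fin f0(1) F'_def by (simp add: sum.remove)
  have intF': "\<forall>i. (\<Sum>f\<in>F'. c f *\<^sub>R f) $ i \<in> \<int>"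
  proof
    fix i
    have "f0 \<in> edgevecs G" using f0(1) FW by blast
    then have f0i: "f0 $ i \<in> \<int>" by (rule edge_int)
    have e1: "(\<Sum>f\<in>F'. c f *\<^sub>R f) $ i = (\<Sum>f\<in>F. c f *\<^sub>R f) $ i - c f0 * f0 $ i"
      unfolding sumF by simp
    have e2: "(\<Sum>f\<in>F. c f *\<^sub>R f) $ i \<in> \<int>" using intF by (rule spec)
    show "(\<Sum>f\<in>F'. c f *\<^sub>R f) $ i \<in> \<int>"
      unfolding e1 by (intro Ints_diff Ints_mult e2 c0 f0i)
  qed
  have cF': "card F' = n" using fin f0(1) F'_def Suc.prems(1) by simp
  have "\<forall>f\<in>F'. c f \<in> \<int>" using Suc.IH[OF cF' F'W indF' intF'] .
  then show ?case using c0 F'_def by blast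
qed

lemma unimod:
  assumes "F \<subseteq> edgevecs G" "independent F" "\<forall>i. (\<Sum>f\<in>F. c f *\<^sub>R f) $ i \<in> \<int>"
  shows "\<forall>f\<in>F. c f \<in> \<int>"
  using unimod_aux[OF refl assms] .

lemma sum_ext_zero:
  assumes "finite S" "F \<subseteq> S"
  shows "(\<Sum>v\<in>S. (if v \<in> F then c v else 0) *\<^sub>R (v::'a::real_vector)) = (\<Sum>v\<in>F. c v *\<^sub>R v)"
    and "(\<Sum>v\<in>S. (if v \<in> F then c v else (0::real))) = sum c F"
proof -
  have "(\<Sum>v\<in>S. (if v \<in> F then c v else 0) *\<^sub>R v) = (\<Sum>v\<in>S. if v \<in> F then c v *\<^sub>R v else 0)"
    by (intro sum.cong) auto
  also have "\<dots> = (\<Sum>v\<in>S \<inter> F. c v *\<^sub>R v)" using sum.inter_restrict[OF assms(1), symmetric] .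
  also have "S \<inter> F = F" using assms(2) by auto
  finally show "(\<Sum>v\<in>S. (if v \<in> F then c v else 0) *\<^sub>R v) = (\<Sum>v\<in>F. c v *\<^sub>R v)" .
  have "(\<Sum>v\<in>S. (if v \<in> F then c v else (0::real))) = (\<Sum>v\<in>S \<inter> F. c v)"
    using sum.inter_restrict[OF assms(1), symmetric] .
  also have "S \<inter> F = F" using assms(2) by auto
  finally show "(\<Sum>v\<in>S. (if v \<in> F then c v else (0::real))) = sum c F" .
qed

lemma bary_unique:
  fixes S :: "'a::real_vector set"
  assumes ai: "\<not> affine_dependent S" and fin: "finite S" and FS: "F \<subseteq> S" and F'S: "F' \<subseteq> S"
    and s1: "sum c F = 1" and s2: "sum c' F' = 1"
    and eq: "(\<Sum>f\<in>F. c f *\<^sub>R f) = (\<Sum>f\<in>F'. c' f *\<^sub>R f)"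
  shows "\<forall>v\<in>S. (if v \<in> F then c v else 0) = (if v \<in> F' then c' v else 0)"
proof (rule ccontr)
  assume ne: "\<not> ?thesis"
  define U where "U v = (if v \<in> F then c v else 0) - (if v \<in> F' then c' v else 0)" for v
  have "sum U S = 0" unfolding U_def sum_subtractf
    using sum_ext_zero(2)[OF fin FS] sum_ext_zero(2)[OF fin F'S] s1 s2 by simp
  moreover have "(\<Sum>v\<in>S. U v *\<^sub>R v) = 0" unfolding U_def scaleR_left_diff_distrib sum_subtractf
    sum_ext_zero(1)[OF fin FS] sum_ext_zero(1)[OF fin F'S] eq by (rule diff_self)
  moreover have "\<exists>v\<in>S. U v \<noteq> 0" using ne unfolding U_def by simp
  ultimately have "affine_dependent S" unfolding affine_dependent_explicit_finite[OF fin] by blast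
  then show False using ai by simp
qed

lemma conv_comb:
  fixes F :: "'a::real_vector set"
  assumes "finite F" "\<forall>f\<in>F. 0 \<le> c f" "sum c F = 1"
  shows "(\<Sum>f\<in>F. c f *\<^sub>R f) \<in> convex hull F"
  unfolding convex_hull_finite[OF assms(1)] using assms(2,3) by (intro CollectI exI[of _ c]) simp

lemma support_lemma:
  fixes S S' F :: "'a::euclidean_space set"
  assumes aiS: "\<not> affine_dependent S" and finS: "finite S" and finS': "finite S'"
    and face: "(convex hull S \<inter> convex hull S') face_of (convex hull S)"
    and extF: "\<forall>f\<in>F. f extreme_point_of Q" and subQ: "convex hull S' \<subseteq> Q"
    and FS: "F \<subseteq> S" and pos: "\<forall>f\<in>F. 0 < c f" and s1: "sum c F = 1"
    and xS': "(\<Sum>f\<in>F. c f *\<^sub>R f) \<in> convex hull S'"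
  shows "F \<subseteq> S'"
proof -
  have "\<exists>K. K \<subseteq> S \<and> convex hull S \<inter> convex hull S' = convex hull K"
    using face unfolding face_of_convex_hull_affine_independent[OF aiS] .
  then obtain K where KS: "K \<subseteq> S" and K: "convex hull S \<inter> convex hull S' = convex hull K"
    by blast
  have finF: "finite F" using FS finS finite_subset by blast
  have finK: "finite K" using KS finS finite_subset by blast
  have nn: "\<forall>f\<in>F. 0 \<le> c f" using pos by (simp add: less_imp_le)
  have "(\<Sum>f\<in>F. c f *\<^sub>R f) \<in> convex hull F" using conv_comb[OF finF nn s1] .
  then have xS: "(\<Sum>f\<in>F. c f *\<^sub>R f) \<in> convex hull S" using hull_mono[OF FS] by (rule subsetD[rotated])
  have "(\<Sum>f\<in>F. c f *\<^sub>R f) \<in> convex hull K" unfolding K[symmetric] using xS xS' by (rule IntI)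
  then obtain c' where c': "\<forall>x\<in>K. 0 \<le> c' x" "sum c' K = 1" "(\<Sum>x\<in>K. c' x *\<^sub>R x) = (\<Sum>f\<in>F. c f *\<^sub>R f)"
    unfolding convex_hull_finite[OF finK] mem_Collect_eq by blast
  have bu: "\<forall>v\<in>S. (if v \<in> F then c v else 0) = (if v \<in> K then c' v else 0)"
    using bary_unique[OF aiS finS FS KS s1 c'(2) c'(3)[symmetric]] .
  have FK: "F \<subseteq> K"
  proof
    fix v assume v: "v \<in> F"
    then have "v \<in> S" using FS by auto
    then have "(if v \<in> F then c v else 0) = (if v \<in> K then c' v else 0)" using bu by (rule bspec[rotated])
    then have "c v = (if v \<in> K then c' v else 0)" using v by simp
    moreover have "0 < c v" using pos v by simp
    ultimately show "v \<in> K" by (cases "v \<in> K") auto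
  qed
  show ?thesis
  proof
    fix f assume f: "f \<in> F"
    have "f \<in> K" using FK f by (rule subsetD)
    then have "f \<in> convex hull K" by (rule hull_inc)
    then have fS': "f \<in> convex hull S'" unfolding K[symmetric] by (rule IntD2)
    have fQ: "f extreme_point_of Q" using extF f by (rule bspec)
    have "f extreme_point_of (convex hull S')"
      unfolding extreme_point_of_def
    proof (intro conjI ballI)
      show "f \<in> convex hull S'" by (rule fS')
      fix a b assume "a \<in> convex hull S'" "b \<in> convex hull S'"
      then have "a \<in> Q" "b \<in> Q" using subQ by auto
      then show "f \<notin> open_segment a b" using fQ unfolding extreme_point_of_def by blast
    qed
    then show "f \<in> S'" by (rule extreme_point_of_convex_hull)
  qed
qed


definition G0 :: "real fps" where "G0 = Abs_fps (\<lambda>_. 1)"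
definition Gd :: "nat \<Rightarrow> real fps" where "Gd d = Abs_fps (\<lambda>s. real ((s + d) choose d))"

lemma mult_1mX_nth: "fps_nth ((f::real fps) * (1 - fps_X)) s = fps_nth f s - (if s = 0 then 0 else fps_nth f (s - 1))"
  by (simp add: algebra_simps mult.commute[of f fps_X])

lemma G0_inv: "G0 * (1 - fps_X) = 1"
  by (rule fps_ext) (simp add: mult_1mX_nth G0_def)

lemma Gd_step: "Gd (Suc d) * (1 - fps_X) = Gd d"
proof (rule fps_ext)
  fix s
  show "fps_nth (Gd (Suc d) * (1 - fps_X)) s = fps_nth (Gd d) s"
  proof (cases s)
    case 0 then show ?thesis by (simp add: mult_1mX_nth Gd_def)
  next
    case (Suc m)
    have "(Suc m + Suc d) choose (Suc d) = ((Suc m + d) choose d) + ((m + Suc d) choose (Suc d))"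
      by (simp add: choose_reduce_nat)
    then show ?thesis using Suc by (simp add: mult_1mX_nth Gd_def)
  qed
qed

lemma Gd_inv: "Gd d * (1 - fps_X) ^ Suc d = 1"
proof (induction d)
  case 0
  have "Gd 0 = G0" by (simp add: Gd_def G0_def)
  then show ?case using G0_inv by simp
next
  case (Suc d)
  have "Gd (Suc d) * (1 - fps_X) ^ Suc (Suc d) = (Gd (Suc d) * (1 - fps_X)) * (1 - fps_X) ^ Suc d"
    by (simp add: algebra_simps)
  also have "\<dots> = 1" using Suc Gd_step by simp
  finally show ?case .
qed

lemma K_inv: "(fps_X * G0) ^ j * (1 - fps_X) ^ j = fps_X ^ j"
proof -
  have "(fps_X * G0) ^ j * (1 - fps_X) ^ j = (fps_X * (G0 * (1 - fps_X))) ^ j"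
    by (simp add: power_mult_distrib mult_ac)
  then show ?thesis by (simp add: G0_inv)
qed

lemma alg_main:
  fixes a f :: "nat \<Rightarrow> real" and E :: "nat \<Rightarrow> real"
  assumes h1: "\<forall>s. E s = (\<Sum>k\<le>d. a k * real ((s + d - k) choose d))"
    and h2: "\<forall>s. E s = (\<Sum>j\<le>Suc d. f j * fps_nth ((fps_X * G0) ^ j) s)"
  shows "(\<Sum>k\<le>d. a k * x ^ k) = (\<Sum>j\<le>Suc d. f j * (x ^ j * (1 - x) ^ (Suc d - j)))"
proof -
  define A where "A = (\<Sum>k\<le>d. fps_const (a k) * fps_X ^ k)"
  define R where "R = (\<Sum>j\<le>Suc d. fps_const (f j) * (fps_X ^ j * (1 - fps_X) ^ (Suc d - j)))"
  have e1: "Abs_fps E = A * Gd d"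
  proof (rule fps_ext)
    fix s
    have "fps_nth (A * Gd d) s = (\<Sum>k\<le>d. a k * fps_nth (fps_X ^ k * Gd d) s)"
      unfolding A_def sum_distrib_right by (simp add: fps_sum_nth mult.assoc)
    also have "\<dots> = (\<Sum>k\<le>d. a k * real ((s + d - k) choose d))"
    proof (rule sum.cong[OF refl])
      fix k assume "k \<in> {..d}"
      show "a k * fps_nth (fps_X ^ k * Gd d) s = a k * real ((s + d - k) choose d)"
        proof (cases "k \<le> s")
          case True then show ?thesis by (simp add: fps_X_power_mult_nth Gd_def)
        next
          case False then have "s + d - k < d" using \<open>k \<in> {..d}\<close> by auto
          with False show ?thesis by (simp add: fps_X_power_mult_nth binomial_eq_0)
        qed
    qed
    finally show "fps_nth (Abs_fps E) s = fps_nth (A * Gd d) s" using h1 by simp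
  qed
  have e2: "Abs_fps E = (\<Sum>j\<le>Suc d. fps_const (f j) * (fps_X * G0) ^ j)"
    by (rule fps_ext) (simp add: fps_sum_nth h2[rule_format])
  have "A = A * (Gd d * (1 - fps_X) ^ Suc d)" by (simp only: Gd_inv mult_1_right)
  also have "\<dots> = Abs_fps E * (1 - fps_X) ^ Suc d" by (simp add: e1 mult.assoc)
  also have "\<dots> = (\<Sum>j\<le>Suc d. fps_const (f j) * ((fps_X * G0) ^ j * (1 - fps_X) ^ j) * (1 - fps_X) ^ (Suc d - j))"
    unfolding e2 sum_distrib_right
  proof (rule sum.cong[OF refl])
    fix j assume "j \<in> {..Suc d}"
    then have "(1 - fps_X) ^ Suc d = (1 - fps_X) ^ j * ((1 - fps_X) ^ (Suc d - j) :: real fps)"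
      by (simp add: power_add[symmetric])
    then show "fps_const (f j) * (fps_X * G0) ^ j * (1 - fps_X) ^ Suc d =
      fps_const (f j) * ((fps_X * G0) ^ j * (1 - fps_X) ^ j) * (1 - fps_X) ^ (Suc d - j)"
      by (simp add: mult.assoc)
  qed
  also have "\<dots> = R" unfolding R_def K_inv by (simp add: mult.assoc)
  finally have AR: "A = R" .
  define pA where "pA = (\<Sum>k\<le>d. monom (a k) k)"
  define pR where "pR = (\<Sum>j\<le>Suc d. smult (f j) (monom 1 j * [:1, -1:] ^ (Suc d - j)))"
  have "fps_of_poly pA = A" unfolding pA_def A_def by (simp add: fps_of_poly_sum fps_of_poly_monom)
  moreover have X1: "fps_of_poly [:1, -1:] = (1 - fps_X :: real fps)"
    by (simp add: fps_of_poly_pCons fps_of_poly_const) 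
  have "fps_of_poly pR = R" unfolding pR_def R_def fps_of_poly_sum fps_of_poly_smult
      fps_of_poly_mult fps_of_poly_power fps_of_poly_monom' X1 ..
  ultimately have "pA = pR" using AR fps_of_poly_eq_iff by metis
  then have "poly pA x = poly pR x" by simp
  then show ?thesis unfolding pA_def pR_def by (simp add: poly_sum poly_monom)
qed

definition pcomp :: "'a set \<Rightarrow> nat \<Rightarrow> ('a \<Rightarrow> nat) set" where
  "pcomp F s = {l. (\<forall>f\<in>F. 1 \<le> l f) \<and> (\<forall>f. f \<notin> F \<longrightarrow> l f = 0) \<and> sum l F = s}"

lemma pcomp_empty: "pcomp {} s = (if s = 0 then {\<lambda>_. 0} else {})"
  by (auto simp: pcomp_def)

lemma pcomp_insert:
  assumes "finite F" "a \<notin> F"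
  shows "pcomp (insert a F) s = (\<lambda>(m, l). l(a := m)) ` (SIGMA m:{1..s}. pcomp F (s - m))"
proof (intro equalityI subsetI)
  fix l assume l: "l \<in> pcomp (insert a F) s"
  then have s: "l a + sum l F = s" using assms by (simp add: pcomp_def)
  have "l = (l(a := 0))(a := l a)" by simp
  moreover have "(l a, l(a := 0)) \<in> (SIGMA m:{1..s}. pcomp F (s - m))"
  proof -
    have "sum (l(a:=0)) F = sum l F" using assms by (intro sum.cong) auto
    then show ?thesis using l s assms by (auto simp: pcomp_def)
  qed
  ultimately show "l \<in> (\<lambda>(m, l). l(a := m)) ` (SIGMA m:{1..s}. pcomp F (s - m))"
    by (metis (no_types, lifting) case_prod_conv image_eqI)
next
  fix x assume "x \<in> (\<lambda>(m, l). l(a := m)) ` (SIGMA m:{1..s}. pcomp F (s - m))"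
  then obtain m l where x: "x = l(a := m)" and m: "1 \<le> m" "m \<le> s" and l: "l \<in> pcomp F (s - m)" by auto
  have "sum x F = sum l F" using assms x by (intro sum.cong) auto
  then show "x \<in> pcomp (insert a F) s" using l m x assms by (auto simp: pcomp_def)
qed

lemma pcomp_card:
  assumes "finite F"
  shows "finite (pcomp F s) \<and> real (card (pcomp F s)) = fps_nth ((fps_X * G0) ^ card F) s"
  using assms
proof (induction F arbitrary: s rule: finite_induct)
  case empty then show ?case by (simp add: pcomp_empty)
next
  case (insert a F)
  have inj: "inj_on (\<lambda>(m, l). l(a := m)) (SIGMA m:{1..s}. pcomp F (s - m))"
  proof (rule inj_onI, clarsimp)
    fix m l m' l' assume "l \<in> pcomp F (s - m)" "l' \<in> pcomp F (s - m')" "l(a := m) = l'(a := m')"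
    then show "m = m' \<and> l = l'" using insert(2)
      apply (simp add: pcomp_def fun_eq_iff)
      apply (metis (full_types))
      done
  qed
  have fin: "finite (SIGMA m:{1..s}. pcomp F (s - m))" using insert.IH by auto
  have "real (card (pcomp (insert a F) s)) = real (card (SIGMA m:{1..s}. pcomp F (s - m)))"
    using pcomp_insert[OF insert(1,2)] card_image[OF inj] by simp
  also have "\<dots> = (\<Sum>m\<in>{1..s}. real (card (pcomp F (s - m))))"
    using insert.IH by (simp add: card_SigmaI)
  also have "\<dots> = (\<Sum>m\<in>{1..s}. fps_nth ((fps_X * G0) ^ card F) (s - m))"
    using insert.IH by simp
  also have "\<dots> = (\<Sum>i=0..s. fps_nth (fps_X * G0) i * fps_nth ((fps_X * G0) ^ card F) (s - i))"
  proof -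
    have "{0..s} = insert 0 {1..s}" by auto
    then show ?thesis by (simp add: G0_def)
  qed
  also have "\<dots> = fps_nth ((fps_X * G0) ^ card (insert a F)) s"
    using insert(1,2) by (simp add: fps_mult_nth)
  finally show ?case using pcomp_insert[OF insert(1,2)] fin by simp
qed


locale tri_ctx =
  fixes G :: "'e::finite \<Rightarrow> 'v::finite \<Rightarrow> bool" and d :: nat and T :: "(real ^ ('e + 'v)) set set"
  assumes tri: "is_triangulation d (root_polytope G) T"
begin

abbreviation "Q \<equiv> root_polytope G"

lemma Qdef: "Q = convex hull edgevecs G" by (simp add: root_polytope_def edgevecs_def)

lemma T1: "S \<in> T \<Longrightarrow> S \<subseteq> {x. x extreme_point_of Q} \<and> \<not> affine_dependent S \<and> card S = d + 1"
  using tri unfolding is_triangulation_def by blast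

lemma T2: "S \<in> T \<Longrightarrow> S' \<in> T \<Longrightarrow> (convex hull S \<inter> convex hull S') face_of (convex hull S)"
  using tri unfolding is_triangulation_def by blast

lemma T3: "\<Union> ((\<lambda>S. convex hull S) ` T) = Q"
  using tri unfolding is_triangulation_def by blast

lemma extW: "x extreme_point_of Q \<Longrightarrow> x \<in> edgevecs G"
  unfolding Qdef by (rule extreme_point_of_convex_hull)

lemma SW: "S \<in> T \<Longrightarrow> S \<subseteq> edgevecs G"
  using T1 extW by blast

lemma finS: "S \<in> T \<Longrightarrow> finite S"
  using SW edgevecs_finite finite_subset by blast

lemma aiS: "S \<in> T \<Longrightarrow> \<not> affine_dependent S"
  using T1 by blast

lemma convQ: "S \<in> T \<Longrightarrow> convex hull S \<subseteq> Q"
  using T3 by blast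

lemma extS: "S \<in> T \<Longrightarrow> \<forall>f\<in>S. f extreme_point_of Q"
  using T1 by blast

definition Phi :: "(real ^ ('e + 'v)) set set" where "Phi = {F. \<exists>S\<in>T. F \<subseteq> S}"

lemma finPhi: "finite Phi"
proof -
  have "Phi \<subseteq> Pow (edgevecs G)" unfolding Phi_def using SW by blast
  then show ?thesis using edgevecs_finite finite_subset by blast
qed

definition phi :: "(real ^ ('e + 'v)) set \<times> ((real ^ ('e + 'v)) \<Rightarrow> nat) \<Rightarrow> real ^ ('e + 'v)" where
  "phi p = (\<Sum>f\<in>fst p. real (snd p f) *\<^sub>R f)"

definition Lat :: "nat \<Rightarrow> (real ^ ('e + 'v)) set" where
  "Lat s = {x \<in> (\<lambda>p. real s *\<^sub>R p) ` Q. \<forall>i. x $ i \<in> \<int>}"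

lemma pcomp_zero: "l \<in> pcomp F 0 \<Longrightarrow> finite F \<Longrightarrow> F = {}"
proof (rule ccontr)
  assume l: "l \<in> pcomp F 0" and fin: "finite F" and ne: "F \<noteq> {}"
  then obtain f where f: "f \<in> F" by blast
  have "l f \<le> sum l F" using f _ fin by (rule member_le_sum) simp
  then show False using l f unfolding pcomp_def by auto
qed

lemma phi_in:
  assumes F: "F \<in> Phi" and l: "l \<in> pcomp F s"
  shows "phi (F, l) \<in> Lat s"
proof -
  obtain S where S: "S \<in> T" "F \<subseteq> S" using F unfolding Phi_def by blast
  have finF: "finite F" using finS[OF S(1)] S(2) finite_subset by blast
  have FW: "F \<subseteq> edgevecs G" using SW[OF S(1)] S(2) by blast
  have int: "\<forall>i. phi (F, l) $ i \<in> \<int>"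
  proof
    fix i
    have "phi (F, l) $ i = (\<Sum>f\<in>F. real (l f) * f $ i)" unfolding phi_def by simp
    also have "\<dots> \<in> \<int>"
    proof (rule Ints_sum)
      fix f assume "f \<in> F"
      then have "f $ i \<in> \<int>" using FW edge_int by blast
      then show "real (l f) * f $ i \<in> \<int>" by (intro Ints_mult Ints_of_nat)
    qed
    finally show "phi (F, l) $ i \<in> \<int>" .
  qed
  have "phi (F, l) \<in> (\<lambda>p. real s *\<^sub>R p) ` Q"
  proof (cases "s = 0")
    case True
    then have "F = {}" using pcomp_zero l finF by blast
    then have p0: "phi (F, l) = 0" unfolding phi_def by simp
    have "card S = Suc d" using T1[OF S(1)] by simp
    then have "S \<noteq> {}" by auto
    then obtain q where q: "q \<in> S" by blast
    have "q \<in> convex hull S" using q by (rule hull_inc)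
    then have "q \<in> Q" using convQ[OF S(1)] by blast
    then show ?thesis unfolding p0 True by (intro image_eqI[of _ _ q]) simp_all
  next
    case False
    define y where "y = (\<Sum>f\<in>F. (real (l f) / real s) *\<^sub>R f)"
    have sl: "sum l F = s" using l unfolding pcomp_def by blast
    have "(\<Sum>f\<in>F. real (l f) / real s) = real (sum l F) / real s"
      by (simp add: sum_divide_distrib)
    then have s1: "(\<Sum>f\<in>F. real (l f) / real s) = 1" using sl False by simp
    have "y \<in> convex hull F" unfolding y_def by (rule conv_comb[OF finF _ s1]) simp
    then have "y \<in> convex hull S" using hull_mono[OF S(2)] by (rule subsetD[rotated])
    then have yQ: "y \<in> Q" using convQ[OF S(1)] by (rule subsetD[rotated])
    have "real s *\<^sub>R y = phi (F, l)" unfolding y_def phi_def using False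
      by (simp add: scaleR_sum_right)
    then show ?thesis using yQ by (intro image_eqI[of _ _ y]) simp_all
  qed
  then show ?thesis unfolding Lat_def using int by blast
qed


lemma pcomp_c:
  assumes l: "l \<in> pcomp F s" and s: "s \<noteq> 0" and fin: "finite F"
  shows "(\<Sum>f\<in>F. real (l f) / real s) = 1" "\<forall>f\<in>F. 0 < real (l f) / real s"
proof -
  have sl: "sum l F = s" using l unfolding pcomp_def by blast
  have "(\<Sum>f\<in>F. real (l f) / real s) = real (sum l F) / real s"
    by (simp add: sum_divide_distrib)
  then show "(\<Sum>f\<in>F. real (l f) / real s) = 1" using sl s by simp
  show "\<forall>f\<in>F. 0 < real (l f) / real s"
  proof
    fix f assume "f \<in> F"
    then have "1 \<le> l f" using l unfolding pcomp_def by blast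
    then show "0 < real (l f) / real s" using s by simp
  qed
qed

lemma phi_scale: "s \<noteq> 0 \<Longrightarrow> (\<Sum>f\<in>F. (real (l f) / real s) *\<^sub>R f) = (1 / real s) *\<^sub>R phi (F, l)"
  unfolding phi_def by (simp add: scaleR_sum_right)

lemma phi_inj: "inj_on phi (SIGMA F:Phi. pcomp F s)"
proof (rule inj_onI)
  fix p p' assume p: "p \<in> (SIGMA F:Phi. pcomp F s)" and p': "p' \<in> (SIGMA F:Phi. pcomp F s)"
    and eq: "phi p = phi p'"
  obtain F l where pFl: "p = (F, l)" and F: "F \<in> Phi" and l: "l \<in> pcomp F s" using p by blast
  obtain F' l' where pFl': "p' = (F', l')" and F': "F' \<in> Phi" and l': "l' \<in> pcomp F' s" using p' by blast
  obtain S where S: "S \<in> T" "F \<subseteq> S" using F unfolding Phi_def by blast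
  obtain S' where S': "S' \<in> T" "F' \<subseteq> S'" using F' unfolding Phi_def by blast
  have finF: "finite F" using finS[OF S(1)] S(2) finite_subset by blast
  have finF': "finite F'" using finS[OF S'(1)] S'(2) finite_subset by blast
  show "p = p'"
  proof (cases "s = 0")
    case True
    have "F = {}" using pcomp_zero l finF True by blast
    moreover have "F' = {}" using pcomp_zero l' finF' True by blast
    ultimately show ?thesis using l l' pFl pFl' True by (simp add: pcomp_empty)
  next
    case False
    define c where "c f = real (l f) / real s" for f
    define c' where "c' f = real (l' f) / real s" for f
    have s1: "sum c F = 1" and pos: "\<forall>f\<in>F. 0 < c f" using pcomp_c[OF l False finF] unfolding c_def by auto
    have s1': "sum c' F' = 1" and pos': "\<forall>f\<in>F'. 0 < c' f" using pcomp_c[OF l' False finF'] unfolding c'_def by auto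
    have xeq: "(\<Sum>f\<in>F. c f *\<^sub>R f) = (\<Sum>f\<in>F'. c' f *\<^sub>R f)"
      unfolding c_def c'_def phi_scale[OF False] using eq pFl pFl' by simp
    have "(\<Sum>f\<in>F'. c' f *\<^sub>R f) \<in> convex hull F'"
      using conv_comb[OF finF' _ s1'] pos' by (simp add: less_imp_le)
    then have "(\<Sum>f\<in>F'. c' f *\<^sub>R f) \<in> convex hull S'" using hull_mono[OF S'(2)] by (rule subsetD[rotated])
    then have xS': "(\<Sum>f\<in>F. c f *\<^sub>R f) \<in> convex hull S'" unfolding xeq .
    have extF: "\<forall>f\<in>F. f extreme_point_of Q" using extS[OF S(1)] S(2) by blast
    have FS': "F \<subseteq> S'"
      by (rule support_lemma[OF aiS[OF S(1)] finS[OF S(1)] finS[OF S'(1)] T2[OF S(1) S'(1)]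
            extF convQ[OF S'(1)] S(2) pos s1 xS'])
    have bu: "\<forall>v\<in>S'. (if v \<in> F then c v else 0) = (if v \<in> F' then c' v else 0)"
      by (rule bary_unique[OF aiS[OF S'(1)] finS[OF S'(1)] FS' S'(2) s1 s1' xeq])
    have FF: "F = F'"
    proof (intro equalityI subsetI)
      fix v assume v: "v \<in> F"
      then have "v \<in> S'" using FS' by blast
      then have "(if v \<in> F then c v else 0) = (if v \<in> F' then c' v else 0)" using bu by (rule bspec[rotated])
      then have "c v = (if v \<in> F' then c' v else 0)" using v by simp
      moreover have "0 < c v" using pos v by blast
      ultimately show "v \<in> F'" by (cases "v \<in> F'") auto
    next
      fix v assume v: "v \<in> F'"
      then have "v \<in> S'" using S'(2) by blast
      then have "(if v \<in> F then c v else 0) = (if v \<in> F' then c' v else 0)" using bu by (rule bspec[rotated])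
      then have "(if v \<in> F then c v else 0) = c' v" using v by simp
      moreover have "0 < c' v" using pos' v by blast
      ultimately show "v \<in> F" by (cases "v \<in> F") auto
    qed
    have "l = l'"
    proof
      fix v
      show "l v = l' v"
      proof (cases "v \<in> F")
        case True
        then have "v \<in> S'" using FS' by blast
        then have "(if v \<in> F then c v else 0) = (if v \<in> F' then c' v else 0)" using bu by (rule bspec[rotated])
        then have "c v = c' v" using True FF by simp
        then show ?thesis using False unfolding c_def c'_def by (simp add: divide_cancel_right)
      next
        case nF: False
        then have "l v = 0" using l unfolding pcomp_def by blast
        moreover have "l' v = 0" using l' nF FF unfolding pcomp_def by blast
        ultimately show ?thesis by simp
      qed
    qed
    then show ?thesis using FF pFl pFl' by simp
  qed
qed

lemma real_nat_floor_Ints: "(r::real) \<in> \<int> \<Longrightarrow> 0 \<le> r \<Longrightarrow> real (nat \<lfloor>r\<rfloor>) = r"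
proof -
  assume "r \<in> \<int>" "0 \<le> r"
  then obtain k where k: "r = of_int k" by (auto elim: Ints_cases)
  then have "0 \<le> k" using \<open>0 \<le> r\<close> by simp
  then show ?thesis using k by simp
qed

lemma phi_surj: "Lat s \<subseteq> phi ` (SIGMA F:Phi. pcomp F s)"
proof
  fix x assume x: "x \<in> Lat s"
  then obtain y where y: "y \<in> Q" and xy: "x = real s *\<^sub>R y" and xint: "\<forall>i. x $ i \<in> \<int>"
    unfolding Lat_def by blast
  obtain S where S: "S \<in> T" and yS: "y \<in> convex hull S" using y T3 by blast
  have finS': "finite S" by (rule finS[OF S])
  obtain c where c0: "\<forall>v\<in>S. 0 \<le> c v" and c1: "sum c S = 1" and cy: "(\<Sum>v\<in>S. c v *\<^sub>R v) = y"
    using yS unfolding convex_hull_finite[OF finS'] mem_Collect_eq by blast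
  define w where "w v = real s * c v" for v
  define F where "F = {v \<in> S. 0 < w v}"
  have FS: "F \<subseteq> S" unfolding F_def by blast
  have w0: "\<forall>v\<in>S - F. w v = 0"
  proof
    fix v assume "v \<in> S - F"
    then have "v \<in> S" "\<not> 0 < w v" unfolding F_def by auto
    moreover have "0 \<le> w v" using c0 \<open>v \<in> S\<close> unfolding w_def by simp
    ultimately show "w v = 0" by simp
  qed
  have "x = (\<Sum>v\<in>S. w v *\<^sub>R v)" unfolding xy cy[symmetric] w_def by (simp add: scaleR_sum_right)
  also have "\<dots> = (\<Sum>v\<in>F. w v *\<^sub>R v)"
    by (rule sum.mono_neutral_right[OF finS' FS]) (simp add: w0)
  finally have xF: "x = (\<Sum>v\<in>F. w v *\<^sub>R v)" .
  have FW: "F \<subseteq> edgevecs G" using FS SW[OF S] by blast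
  have aiF: "\<not> affine_dependent F" using affine_independent_subset[OF aiS[OF S] FS] .
  have indF: "independent F" by (rule edge_indep[OF FW aiF])
  have wint: "\<forall>v\<in>F. w v \<in> \<int>" using unimod[OF FW indF] xint unfolding xF by blast
  define l where "l v = (if v \<in> F then nat \<lfloor>w v\<rfloor> else 0)" for v
  have lw: "real (l v) = w v" if "v \<in> F" for v
  proof -
    have "w v \<in> \<int>" using wint that by blast
    moreover have "0 < w v" using that unfolding F_def by blast
    ultimately show ?thesis unfolding l_def using that real_nat_floor_Ints by simp
  qed
  have finF: "finite F" using finS' FS finite_subset by blast
  have "real (sum l F) = (\<Sum>v\<in>F. w v)" using lw by simp
  also have "\<dots> = (\<Sum>v\<in>S. w v)"
    by (rule sum.mono_neutral_left[OF finS' FS]) (simp add: w0)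
  also have "\<dots> = real s" unfolding w_def by (simp add: sum_distrib_left[symmetric] c1)
  finally have "real (sum l F) = real s" .
  then have sl: "sum l F = s" by (rule of_nat_eq_iff[THEN iffD1])
  have lpc: "l \<in> pcomp F s"
    unfolding pcomp_def
  proof (intro CollectI conjI ballI allI impI sl)
    fix f assume f: "f \<in> F"
    then have "0 < real (l f)" using lw[OF f] unfolding F_def by simp
    then show "1 \<le> l f" by simp
  next
    fix f assume "f \<notin> F" then show "l f = 0" unfolding l_def by simp
  qed
  have FPhi: "F \<in> Phi" unfolding Phi_def using S FS by blast
  have "phi (F, l) = x" unfolding phi_def xF using lw by simp
  then show "x \<in> phi ` (SIGMA F:Phi. pcomp F s)" using FPhi lpc by force
qed

lemma phi_bij: "bij_betw phi (SIGMA F:Phi. pcomp F s) (Lat s)"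
  unfolding bij_betw_def
proof (intro conjI phi_inj equalityI)
  show "phi ` (SIGMA F:Phi. pcomp F s) \<subseteq> Lat s" using phi_in by blast
  show "Lat s \<subseteq> phi ` (SIGMA F:Phi. pcomp F s)" by (rule phi_surj)
qed


lemma card_le_Phi: "F \<in> Phi \<Longrightarrow> card F \<le> Suc d"
proof -
  assume "F \<in> Phi"
  then obtain S where S: "S \<in> T" "F \<subseteq> S" unfolding Phi_def by blast
  have "card F \<le> card S" by (rule card_mono[OF finS[OF S(1)] S(2)])
  then show ?thesis using T1[OF S(1)] by simp
qed

lemma count_main:
  "real (ehrhart G s) = (\<Sum>j\<le>Suc d. real (face_count T j) * fps_nth ((fps_X * G0) ^ j) s)"
proof -
  define K where "K j = fps_nth ((fps_X * G0) ^ j) s" for j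
  have finPc: "\<forall>F\<in>Phi. finite (pcomp F s)"
  proof
    fix F assume "F \<in> Phi"
    then obtain S where S: "S \<in> T" "F \<subseteq> S" unfolding Phi_def by blast
    then have "finite F" using finS[OF S(1)] finite_subset by blast
    then show "finite (pcomp F s)" using pcomp_card by blast
  qed
  have "ehrhart G s = card (Lat s)" unfolding ehrhart_def Lat_def by simp
  also have "\<dots> = card (SIGMA F:Phi. pcomp F s)" using bij_betw_same_card[OF phi_bij] by simp
  also have "\<dots> = (\<Sum>F\<in>Phi. card (pcomp F s))" by (rule card_SigmaI[OF finPhi finPc])
  finally have "real (ehrhart G s) = (\<Sum>F\<in>Phi. real (card (pcomp F s)))" by simp
  also have "\<dots> = (\<Sum>F\<in>Phi. K (card F))"
  proof (rule sum.cong[OF refl])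
    fix F assume "F \<in> Phi"
    then obtain S where S: "S \<in> T" "F \<subseteq> S" unfolding Phi_def by blast
    then have "finite F" using finS[OF S(1)] finite_subset by blast
    then show "real (card (pcomp F s)) = K (card F)" unfolding K_def using pcomp_card by blast
  qed
  also have "\<dots> = (\<Sum>j\<le>Suc d. \<Sum>F\<in>{F. F \<in> Phi \<and> card F = j}. K (card F))"
    by (rule sum.group[symmetric, OF finPhi finite_atMost]) (use card_le_Phi in auto)
  also have "\<dots> = (\<Sum>j\<le>Suc d. real (face_count T j) * K j)"
  proof (rule sum.cong[OF refl])
    fix j assume "j \<in> {..Suc d}"
    have eqs: "{F. F \<in> Phi \<and> card F = j} = {F. \<exists>S\<in>T. F \<subseteq> S \<and> card F = j}"
      unfolding Phi_def by blast
    have "(\<Sum>F\<in>{F. F \<in> Phi \<and> card F = j}. K (card F)) = (\<Sum>F\<in>{F. F \<in> Phi \<and> card F = j}. K j)"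
      by (rule sum.cong) auto
    also have "\<dots> = real (card {F. F \<in> Phi \<and> card F = j}) * K j" by simp
    finally show "(\<Sum>F\<in>{F. F \<in> Phi \<and> card F = j}. K (card F)) = real (face_count T j) * K j"
      unfolding face_count_def eqs .
  qed
  finally show ?thesis unfolding K_def .
qed

end


theorem theorem3p9:
  fixes G :: "'e::finite \<Rightarrow> 'v::finite \<Rightarrow> bool"
    and a :: "nat \<Rightarrow> rat"
    and T :: "(real ^ ('e + 'v)) set set"
  assumes conn: "bip_connected G"
    and d_def: "d = CARD('e) + CARD('v) - 2"
    and ehr: "\<forall>s::nat. real (ehrhart G s) = (\<Sum>k\<le>d. real_of_rat (a k) * real ((s + d - k) choose d))"
    and tri: "is_triangulation d (root_polytope G) T"
  shows "\<forall>x::real. x \<noteq> 0 \<longrightarrow>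
           x ^ (CARD('e) + CARD('v) - 1) * h_poly d T (1 / x) = (\<Sum>k\<le>d. real_of_rat (a k) * x ^ k)"
proof (intro allI impI)
  fix x :: real assume x0: "x \<noteq> 0"
  interpret tri_ctx G d T by unfold_locales (rule tri)
  have c1: "CARD('e) \<ge> 1" "CARD('v) \<ge> 1" by (simp_all add: Suc_leI)
  have cd: "CARD('e) + CARD('v) - 1 = Suc d" using d_def c1 by arith
  have h2: "\<forall>s. real (ehrhart G s) = (\<Sum>j\<le>Suc d. real (face_count T j) * fps_nth ((fps_X * G0) ^ j) s)"
    using count_main by blast
  have main: "(\<Sum>k\<le>d. real_of_rat (a k) * x ^ k) =
      (\<Sum>j\<le>Suc d. real (face_count T j) * (x ^ j * (1 - x) ^ (Suc d - j)))"
    by (rule alg_main[of "\<lambda>s. real (ehrhart G s)" "\<lambda>k. real_of_rat (a k)" d "\<lambda>j. real (face_count T j)", OF ehr h2])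
  have "x ^ (CARD('e) + CARD('v) - 1) * h_poly d T (1 / x) =
      (\<Sum>j\<le>Suc d. real (face_count T j) * (x ^ Suc d * (1 / x - 1) ^ (Suc d - j)))"
    unfolding cd h_poly_def f_poly_def by (simp add: sum_distrib_left mult_ac del: sum.atMost_Suc)
  also have "\<dots> = (\<Sum>j\<le>Suc d. real (face_count T j) * (x ^ j * (1 - x) ^ (Suc d - j)))"
  proof (rule sum.cong[OF refl])
    fix j assume "j \<in> {..Suc d}"
    then have "x ^ Suc d = x ^ j * x ^ (Suc d - j)" by (simp add: power_add[symmetric])
    moreover have "x * (1 / x - 1) = 1 - x" using x0 by (simp add: field_simps)
    ultimately have "x ^ Suc d * (1 / x - 1) ^ (Suc d - j) = x ^ j * (1 - x) ^ (Suc d - j)"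
      by (metis (no_types) mult.assoc power_mult_distrib)
    then show "real (face_count T j) * (x ^ Suc d * (1 / x - 1) ^ (Suc d - j)) =
        real (face_count T j) * (x ^ j * (1 - x) ^ (Suc d - j))" by simp
  qed
  finally show "x ^ (CARD('e) + CARD('v) - 1) * h_poly d T (1 / x) = (\<Sum>k\<le>d. real_of_rat (a k) * x ^ k)"
    using main by simp
qed

end
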